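(* Let $\mu\ge0$ and define on $[0,\infty)$ $$\phi(x)=\pi e^{\mu x}Ai(\mu^2+x),\qquad \psi(x)=Ce^{\mu x}Ai(\mu^2+x)+e^{\mu x}Bi(\mu^2+x),$$ with $C=-\frac{\mu Bi(\mu^2)+Bi'(\mu^2)}{\mu Ai(\mu^2)+Ai'(\mu^2)}$. Then $\phi$ is strictly decreasing and $\psi$ is strictly increasing on $[0,\infty)$.
   Context: $Ai,Bi$ are the standard Airy functions, linearly independent solutions of $u''=xu$; on $[0,\infty)$, $Ai$ is positive and decreasing with $Ai(x)\to0$, and $Bi$ is positive and increasing with $Bi(x)\to\infty$ as $x\to\infty$. *)

theory Defs
  imports "HOL-Analysis.Analysis"
begin

text \<open>Airy functions via the standard Maclaurin series (DLMF 9.4.1--9.4.2).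
  The two basic even/odd-type solutions of u'' = x u:
  f(x) = sum_k 3^k (1/3)_k x^(3k) / (3k)!,  g(x) = sum_k 3^k (2/3)_k x^(3k+1) / (3k+1)!.\<close>

definition airy_f :: "real \<Rightarrow> real" where
  "airy_f x = (\<Sum>k. 3 ^ k * pochhammer (1/3) k * x ^ (3*k) / fact (3*k))"

definition airy_g :: "real \<Rightarrow> real" where
  "airy_g x = (\<Sum>k. 3 ^ k * pochhammer (2/3) k * x ^ (3*k+1) / fact (3*k+1))"

text \<open>Ai(0) = 1/(3^(2/3) Gamma(2/3)),  -Ai'(0) = 1/(3^(1/3) Gamma(1/3)).\<close>

definition airy_c1 :: real where
  "airy_c1 = 1 / (3 powr (2/3) * Gamma (2/3))"

definition airy_c2 :: real where
  "airy_c2 = 1 / (3 powr (1/3) * Gamma (1/3))"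

definition Ai :: "real \<Rightarrow> real" where
  "Ai x = airy_c1 * airy_f x - airy_c2 * airy_g x"

definition Bi :: "real \<Rightarrow> real" where
  "Bi x = sqrt 3 * (airy_c1 * airy_f x + airy_c2 * airy_g x)"

end

theory Submission
  imports Defs
begin


definition P :: "(nat \<Rightarrow> real) \<Rightarrow> real \<Rightarrow> real" where
  "P c x = (\<Sum>n. c n * x ^ n)"

lemma fact_bound_step:
  fixes c :: "nat \<Rightarrow> real"
  assumes rec: "\<And>n. c (n+3) * (real (n+3) * real (n+2)) = c n"
  shows "c n ^ 2 * fact n \<le> max (c 0 ^ 2) (max (c 1 ^ 2) (c 2 ^ 2 * 2))"
proof -
  let ?K = "max (c 0 ^ 2) (max (c 1 ^ 2) (c 2 ^ 2 * 2))"
  have step: "c (n+3) ^ 2 * fact (n+3) \<le> c n ^ 2 * fact n" for n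
  proof -
    have f: "fact (n+3) = real (n+3) * real (n+2) * real (n+1) * (fact n :: real)"
      by (simp add: fact_Suc algebra_simps numeral_3_eq_3)
    have pos: "real (n+3) * real (n+2) > 0" by simp
    have "c (n+3) = c n / (real (n+3) * real (n+2))"
      using rec[of n] pos by (simp add: eq_divide_eq)
    hence "c (n+3) ^ 2 * fact (n+3) = (c n / (real (n+3) * real (n+2)))^2 * (real (n+3) * real (n+2) * real (n+1) * fact n)"
      by (simp add: f)
    also have "\<dots> = c n ^ 2 * fact n * (real (n+1) / (real (n+3) * real (n+2)))"
      using pos by (simp add: power2_eq_square divide_simps)
    also have "\<dots> \<le> c n ^ 2 * fact n * 1"
      proof (intro mult_left_mono)
      have "real (n+1) \<le> real (n+3) * real (n+2)" by (simp add: algebra_simps)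
      thus "real (n+1) / (real (n+3) * real (n+2)) \<le> 1" using pos by (simp add: divide_le_eq_1)
    qed auto
    finally show ?thesis by simp
  qed
  have "\<forall>n. c n ^ 2 * fact n \<le> ?K \<and> c (n+1) ^ 2 * fact (n+1) \<le> ?K \<and> c (n+2) ^ 2 * fact (n+2) \<le> ?K"
  proof
    fix n show "c n ^ 2 * fact n \<le> ?K \<and> c (n+1) ^ 2 * fact (n+1) \<le> ?K \<and> c (n+2) ^ 2 * fact (n+2) \<le> ?K"
    proof (induction n)
      case 0 then show ?case by (simp add: numeral_2_eq_2 del: max.bounded_iff) (simp add: max_def)
    next
      case (Suc n)
      have h3: "c (n+3)^2*fact(n+3) \<le> ?K" using step[of n] Suc.IH by linarith
      have e: "n + 1 + 2 = n+3" "n + 1 + 1 = n + 2" "Suc n = n+1" by auto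
      show ?case unfolding e using Suc.IH h3 by blast
    qed
  qed
  thus ?thesis by blast
qed

lemma summable_sqrt_fact:
  fixes y :: real
  shows "summable (\<lambda>n. \<bar>y\<bar> ^ n / sqrt (fact n))"
proof (rule summable_ratio_test[where c = "1/2" and N = "nat \<lceil>4 * y^2\<rceil>"])
  fix n assume n: "n \<ge> nat \<lceil>4 * y^2\<rceil>"
  have "sqrt (fact (Suc n)) = sqrt (real (Suc n)) * sqrt (fact n)"
    by (simp add: real_sqrt_mult)
  moreover have "2 * \<bar>y\<bar> \<le> sqrt (real (Suc n))"
  proof -
    have "(2*\<bar>y\<bar>)^2 \<le> real (Suc n)" using n by (simp add: power2_eq_square; linarith)
    thus ?thesis by (simp add: real_le_rsqrt)
  qed
  ultimately show "norm (\<bar>y\<bar> ^ Suc n / sqrt (fact (Suc n))) \<le> 1/2 * norm (\<bar>y\<bar> ^ n / sqrt (fact n))"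
    using mult_left_mono[of "\<bar>y\<bar> * 2" "sqrt (real (Suc n))" "\<bar>y\<bar>^n"]
    by (auto simp: field_simps mult_right_mono)
qed simp

lemma summable_rec3:
  fixes c :: "nat \<Rightarrow> real"
  assumes rec: "\<And>n. c (n+3) * (real (n+3) * real (n+2)) = c n"
  shows "summable (\<lambda>n. c n * y ^ n)"
proof -
  define K where "K = max (c 0 ^ 2) (max (c 1 ^ 2) (c 2 ^ 2 * 2))"
  have b: "c n ^ 2 * fact n \<le> K" for n unfolding K_def by (rule fact_bound_step[OF rec])
  have "\<bar>c n\<bar> \<le> sqrt K / sqrt (fact n)" for n
  proof -
    have "\<bar>c n\<bar> = sqrt (c n ^ 2 * fact n) / sqrt (fact n)"
      by (simp add: real_sqrt_mult)
    also have "\<dots> \<le> sqrt K / sqrt (fact n)"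
      using b[of n] by (intro divide_right_mono) auto
    finally show ?thesis .
  qed
  hence "norm (c n * y ^ n) \<le> sqrt K * (\<bar>y\<bar> ^ n / sqrt (fact n))" for n
    using mult_right_mono[of "\<bar>c n\<bar>" "sqrt K / sqrt (fact n)" "\<bar>y\<bar>^n"]
    by (auto simp: abs_mult power_abs)
  thus ?thesis
    by (intro summable_comparison_test[OF _ summable_mult[OF summable_sqrt_fact]]) auto
qed




lemma ode_series:
  fixes c :: "nat \<Rightarrow> real"
  assumes rec: "\<And>n. c (n+3) * (real (n+3) * real (n+2)) = c n" and c2: "c 2 = 0"
  shows "(P c has_real_derivative P (diffs c) x) (at x)"
    "(P (diffs c) has_real_derivative x * P c x) (at x)"
proof -
  have sm: "\<And>y. summable (\<lambda>n. c n * y ^ n)" by (rule summable_rec3[OF rec])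
  have sm1: "\<And>y. summable (\<lambda>n. diffs c n * y ^ n)" by (rule termdiff_converges_all[OF sm])
  show "(P c has_real_derivative P (diffs c) x) (at x)"
    unfolding P_def by (rule termdiffs_strong_converges_everywhere[OF sm])
  have "(P (diffs c) has_real_derivative P (diffs (diffs c)) x) (at x)"
    unfolding P_def by (rule termdiffs_strong_converges_everywhere[OF sm1])
  moreover have "P (diffs (diffs c)) x = x * P c x"
  proof -
    have "(\<lambda>n. c n * x ^ n * x) sums (P c x * x)"
      unfolding P_def by (rule sums_mult2[OF summable_sums[OF sm]])
    moreover have "diffs (diffs c) (Suc n) * x ^ Suc n = c n * x ^ n * x" for n
    proof -
      have "diffs (diffs c) (Suc n) = c n"
        using rec[of n] by (simp add: diffs_def numeral_3_eq_3 algebra_simps)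
      thus ?thesis by simp
    qed
    ultimately have "(\<lambda>n. diffs (diffs c) (Suc n) * x ^ Suc n) sums (P c x * x)"
      by (metis (no_types, lifting) sums_cong)
    hence "(\<lambda>n. diffs (diffs c) n * x ^ n) sums (P c x * x + diffs (diffs c) 0 * x ^ 0)"
      by (subst (asm) sums_Suc_iff)
    moreover have "diffs (diffs c) 0 = 0" using c2 by (simp add: diffs_def numeral_2_eq_2)
    ultimately show ?thesis unfolding P_def by (simp add: sums_iff mult.commute)
  qed
  ultimately show "(P (diffs c) has_real_derivative x * P c x) (at x)" by simp
qed

definition cf :: "nat \<Rightarrow> real" where
  "cf n = (if n mod 3 = 0 then 3 ^ (n div 3) * pochhammer (1/3) (n div 3) / fact n else 0)"
definition cg :: "nat \<Rightarrow> real" where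
  "cg n = (if n mod 3 = 1 then 3 ^ (n div 3) * pochhammer (2/3) (n div 3) / fact n else 0)"

lemma fact3: "fact (n+3) = real (n+3) * real (n+2) * real (n+1) * (fact n :: real)"
  by (simp add: fact_Suc algebra_simps numeral_3_eq_3)

lemma frac_cancel: "(a::real) \<noteq> 0 \<Longrightarrow> b \<noteq> 0 \<Longrightarrow> d \<noteq> 0 \<Longrightarrow> A * d / (a*b*d*F) * (a*b) = A / F"
  by (cases "F = 0") (simp_all add: field_simps)

lemma cf_rec: "cf (n+3) * (real (n+3) * real (n+2)) = cf n"
proof (cases "n mod 3 = 0")
  case True
  then obtain k where n: "n = 3*k" by auto
  have d: "(3*k+3) div 3 = Suc k" "(3*k) div 3 = k" "(3*k+3) mod 3 = 0" by simp_all
  have e: "3^(Suc k) * (pochhammer (1/3) k * (1/3 + real k)) = 3^k*pochhammer (1/3) k * real (3*k+1)"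
    by (simp add: algebra_simps)
  have "cf (n+3) * (real (n+3) * real (n+2)) = 3^k*pochhammer (1/3) k * real (3*k+1) / 
      (real (3*k+3) * real (3*k+2) * real (3*k+1) * fact (3*k)) * (real (3*k+3) * real (3*k+2))"
    unfolding cf_def n d if_True fact3 pochhammer_Suc e[symmetric] by (simp add: mult.assoc)
  also have "\<dots> = 3 ^ k * pochhammer (1 / 3) k / fact (3 * k)" by (rule frac_cancel) auto
  also have "\<dots> = cf n" unfolding n cf_def by simp
  finally show ?thesis .
next
  case False
  then show ?thesis by (simp add: cf_def)
qed

lemma cg_rec: "cg (n+3) * (real (n+3) * real (n+2)) = cg n"
proof (cases "n mod 3 = 1")
  case True
  then have "n = 3 * (n div 3) + 1" by (metis div_mult_mod_eq mult.commute)
  then obtain k where n: "n = 3*k+1" by blast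
  have d: "(3*k+1+3) div 3 = Suc k" "(3*k+1) div 3 = k" "(3*k+1+3) mod 3 = 1" "(3*k+1) mod 3 = 1" by simp_all
  have e: "3^(Suc k) * (pochhammer (2/3) k * (2/3 + real k)) = 3^k*pochhammer (2/3) k * real (3*k+2)"
    by (simp add: algebra_simps)
  have f: "real (3*k+1+3) = real (3*k+4)" "real (3*k+1+2) = real (3*k+3)" "real (3*k+1+1) = real (3*k+2)" by simp_all
  have "cg (n+3) * (real (n+3) * real (n+2)) = 3^k*pochhammer (2/3) k * real (3*k+2) / 
      (real (3*k+4) * real (3*k+3) * real (3*k+2) * fact (3*k+1)) * (real (3*k+4) * real (3*k+3))"
    unfolding cg_def n d if_True fact3 pochhammer_Suc e[symmetric] f by (simp add: mult.assoc)
  also have "\<dots> = 3 ^ k * pochhammer (2 / 3) k / fact (3 * k + 1)" by (rule frac_cancel) auto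
  also have "\<dots> = cg n" unfolding n cg_def using d by simp
  finally show ?thesis .
next
  case False
  then show ?thesis by (simp add: cg_def)
qed

lemma cf2: "cf 2 = 0" and cg2: "cg 2 = 0" by (simp_all add: cf_def cg_def)

lemma airy_f_P: "airy_f x = P cf x"
proof -
  have sm: "summable (\<lambda>n. cf n * x ^ n)" by (rule summable_rec3[OF cf_rec])
  have "(\<lambda>k. cf (3*k) * x ^ (3*k)) sums P cf x"
    unfolding P_def
  proof (subst sums_mono_reindex[where g = "\<lambda>k. 3*k"])
    show "strict_mono (\<lambda>k. 3*k::nat)" by (auto simp: strict_mono_def)
    fix n assume "n \<notin> range (\<lambda>k. 3*k::nat)"
    hence "n mod 3 \<noteq> 0"
    proof (rule contrapos_nn)
      assume "n mod 3 = 0"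
      hence "n = 3 * (n div 3)" using div_mult_mod_eq[of n 3] by simp
      thus "n \<in> range (\<lambda>k. 3*k::nat)" by blast
    qed
    thus "cf n * x ^ n = 0" by (simp add: cf_def)
  qed (rule summable_sums[OF sm])
  moreover have "cf (3*k) * x ^ (3*k) = 3 ^ k * pochhammer (1/3) k * x ^ (3*k) / fact (3*k)" for k
    by (simp add: cf_def)
  ultimately show ?thesis unfolding airy_f_def by (simp add: sums_iff)
qed

lemma airy_g_P: "airy_g x = P cg x"
proof -
  have sm: "summable (\<lambda>n. cg n * x ^ n)" by (rule summable_rec3[OF cg_rec])
  have "(\<lambda>k. cg (3*k+1) * x ^ (3*k+1)) sums P cg x"
    unfolding P_def
  proof (subst sums_mono_reindex[where g = "\<lambda>k. 3*k+1"])
    show "strict_mono (\<lambda>k. 3*k+1::nat)" by (auto simp: strict_mono_def)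
    fix n assume "n \<notin> range (\<lambda>k. 3*k+1::nat)"
    hence "n mod 3 \<noteq> 1"
    proof (rule contrapos_nn)
      assume "n mod 3 = 1"
      hence "n = 3 * (n div 3) + 1" by (metis div_mult_mod_eq mult.commute)
      thus "n \<in> range (\<lambda>k. 3*k+1::nat)" by blast
    qed
    thus "cg n * x ^ n = 0" by (simp add: cg_def)
  qed (rule summable_sums[OF sm])
  moreover have "cg (3*k+1) * x ^ (3*k+1) = 3 ^ k * pochhammer (2/3) k * x ^ (3*k+1) / fact (3*k+1)" for k
  proof -
    have "Suc (3*k) div 3 = k" "Suc (3*k) mod 3 = 1" by presburger+
    thus ?thesis by (simp add: cg_def)
  qed
  ultimately show ?thesis unfolding airy_g_def by (simp add: sums_iff)
qed




definition Aid :: "real \<Rightarrow> real" where "Aid x = airy_c1 * P (diffs cf) x - airy_c2 * P (diffs cg) x"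
definition Bid :: "real \<Rightarrow> real" where "Bid x = sqrt 3 * (airy_c1 * P (diffs cf) x + airy_c2 * P (diffs cg) x)"

lemma Ai_P: "Ai = (\<lambda>x. airy_c1 * P cf x - airy_c2 * P cg x)"
  by (auto simp: Ai_def airy_f_P airy_g_P)
lemma Bi_P: "Bi = (\<lambda>x. sqrt 3 * (airy_c1 * P cf x + airy_c2 * P cg x))"
  by (auto simp: Bi_def airy_f_P airy_g_P)

lemma Pf1: "((\<lambda>x. P cf x) has_real_derivative P (diffs cf) x) (at x)"
  using ode_series(1)[OF cf_rec cf2] by simp
lemma Pg1: "((\<lambda>x. P cg x) has_real_derivative P (diffs cg) x) (at x)"
  using ode_series(1)[OF cg_rec cg2] by simp
lemma Pf2: "((\<lambda>x. P (diffs cf) x) has_real_derivative x * P cf x) (at x)"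
  using ode_series(2)[OF cf_rec cf2] by simp
lemma Pg2: "((\<lambda>x. P (diffs cg) x) has_real_derivative x * P cg x) (at x)"
  using ode_series(2)[OF cg_rec cg2] by simp

lemma Ai_deriv: "(Ai has_real_derivative Aid x) (at x)"
  unfolding Ai_P Aid_def
  by (auto intro!: derivative_eq_intros Pf1 Pg1 Pf2 Pg2)
lemma Bi_deriv: "(Bi has_real_derivative Bid x) (at x)"
  unfolding Bi_P Bid_def
  by (auto intro!: derivative_eq_intros Pf1 Pg1 Pf2 Pg2)
lemma Aid_deriv: "(Aid has_real_derivative x * Ai x) (at x)"
proof -
  have "(Aid has_real_derivative airy_c1 * (x * P cf x) - airy_c2 * (x * P cg x)) (at x)"
    unfolding Aid_def
    by (auto intro!: derivative_eq_intros Pf1 Pg1 Pf2 Pg2)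
  thus ?thesis by (simp add: Ai_P algebra_simps)
qed
lemma Bid_deriv: "(Bid has_real_derivative x * Bi x) (at x)"
proof -
  have "(Bid has_real_derivative sqrt 3 * (airy_c1 * (x * P cf x) + airy_c2 * (x * P cg x))) (at x)"
    unfolding Bid_def
    by (auto intro!: derivative_eq_intros Pf1 Pg1 Pf2 Pg2)
  thus ?thesis by (simp add: Bi_P algebra_simps)
qed

lemma Ai_chain[derivative_intros]: "(f has_real_derivative f') (at x within s) \<Longrightarrow> ((\<lambda>x. Ai (f x)) has_real_derivative Aid (f x) * f') (at x within s)"
  by (rule DERIV_chain2[OF Ai_deriv])
lemma Bi_chain[derivative_intros]: "(f has_real_derivative f') (at x within s) \<Longrightarrow> ((\<lambda>x. Bi (f x)) has_real_derivative Bid (f x) * f') (at x within s)"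
  by (rule DERIV_chain2[OF Bi_deriv])
lemma Aid_chain[derivative_intros]: "(f has_real_derivative f') (at x within s) \<Longrightarrow> ((\<lambda>x. Aid (f x)) has_real_derivative (f x * Ai (f x)) * f') (at x within s)"
  by (rule DERIV_chain2[OF Aid_deriv])
lemma Bid_chain[derivative_intros]: "(f has_real_derivative f') (at x within s) \<Longrightarrow> ((\<lambda>x. Bid (f x)) has_real_derivative (f x * Bi (f x)) * f') (at x within s)"
  by (rule DERIV_chain2[OF Bid_deriv])

lemma P_zero: "P c 0 = c 0" unfolding P_def by (rule powser_zero)

lemma c1_pos: "airy_c1 > 0" unfolding airy_c1_def by simp
lemma c2_pos: "airy_c2 > 0" unfolding airy_c2_def by simp

lemma Ai0: "Ai 0 = airy_c1" and Aid0: "Aid 0 = - airy_c2"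
  and Bi0: "Bi 0 = sqrt 3 * airy_c1" and Bid0: "Bid 0 = sqrt 3 * airy_c2"
  by (simp_all add: Ai_P Bi_P Aid_def Bid_def P_zero diffs_def cf_def cg_def)

lemma wronskian: "Ai x * Bid x - Aid x * Bi x = 2 * sqrt 3 * airy_c1 * airy_c2"
proof -
  define W where "W x = Ai x * Bid x - Aid x * Bi x" for x
  have "\<forall>x. (W has_real_derivative 0) (at x)"
  proof
    fix x
    show "(W has_real_derivative 0) (at x)"
      unfolding W_def by (auto intro!: derivative_eq_intros simp: algebra_simps)
  qed
  hence "W x = W 0" by (rule DERIV_isconst_all)
  thus ?thesis by (simp add: W_def Ai0 Aid0 Bi0 Bid0 algebra_simps)
qed

lemma wpos: "Ai x * Bid x - Aid x * Bi x > 0"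
  unfolding wronskian using c1_pos c2_pos by simp


lemma Ai_pos_dec:
  assumes bnd: "\<And>x. x \<ge> 0 \<Longrightarrow> \<bar>Ai x\<bar> \<le> B" and t: "t \<ge> 0"
  shows "Ai t > 0 \<and> Aid t < 0"
proof -
  define Q where "Q x = Ai x * Aid x" for x
  have dQ: "(Q has_real_derivative (Aid x)^2 + x * (Ai x)^2) (at x)" for x
    unfolding Q_def by (auto intro!: derivative_eq_intros simp: power2_eq_square algebra_simps)
  have Qpos: "(Aid x)^2 + x * (Ai x)^2 > 0" if "x > 0" for x
  proof -
    have "\<not> (Ai x = 0 \<and> Aid x = 0)" using wpos[of x] by auto
    hence "(Aid x)^2 > 0 \<or> (Ai x)^2 > 0" by auto
    thus ?thesis using that by (auto intro: add_pos_nonneg add_nonneg_pos)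
  qed
  have Qmono: "Q a < Q b" if "0 \<le> a" "a < b" for a b
  proof -
    obtain z where z: "a < z" "z < b" "Q b - Q a = (b - a) * ((Aid z)^2 + z * (Ai z)^2)"
      using MVT2[OF \<open>a < b\<close> dQ] by blast
    have "(b - a) * ((Aid z)^2 + z * (Ai z)^2) > 0"
      using Qpos[of z] z that by simp
    thus ?thesis using z by simp
  qed
  have Qle: "Q x \<le> 0" if "x \<ge> 0" for x
  proof (rule ccontr)
    assume "\<not> Q x \<le> 0"
    hence q: "Q x > 0" by simp
    define s where "s = x + B^2 / (2 * Q x) + 1"
    have "x < s" using q unfolding s_def by (simp add: add_nonneg_pos)
    define A2 where "A2 y = (Ai y)^2" for y
    have dA2: "(A2 has_real_derivative 2 * Q y) (at y)" for y
      unfolding A2_def Q_def by (auto intro!: derivative_eq_intros simp: power2_eq_square algebra_simps)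
    obtain z where z: "x < z" "z < s" "A2 s - A2 x = (s - x) * (2 * Q z)"
      using MVT2[OF \<open>x < s\<close> dA2] by blast
    have "Q z \<ge> Q x" using Qmono[of x z] z that by simp
    hence "(s - x) * (2 * Q z) \<ge> (s - x) * (2 * Q x)" using \<open>x < s\<close> by simp
    also have "(s - x) * (2 * Q x) = B^2 + 2 * Q x" using q unfolding s_def by (simp add: field_simps)
    finally have "A2 s \<ge> B^2 + 2 * Q x" using z(3) zero_le_power2[of "Ai x"] unfolding A2_def by linarith
    moreover have "A2 s \<le> B^2"
    proof -
      have "\<bar>Ai s\<bar> \<le> B" using bnd[of s] \<open>x < s\<close> that by simp
      hence "\<bar>Ai s\<bar>^2 \<le> B^2" by (intro power_mono) auto
      thus ?thesis unfolding A2_def by simp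
    qed
    ultimately show False using q by simp
  qed
  have Qneg: "Q x < 0" if "x \<ge> 0" for x
    using Qmono[of x "x+1"] Qle[of "x+1"] that by simp
  have Aipos: "Ai t > 0"
  proof (rule ccontr)
    assume "\<not> Ai t > 0"
    hence "Ai t \<le> 0" by simp
    moreover have "Ai 0 > 0" using Ai0 c1_pos by simp
    ultimately obtain z where "0 \<le> z" "z \<le> t" "Ai z = 0"
      using IVT2[of Ai t 0 0] t DERIV_isCont[OF Ai_deriv] by force
    thus False using Qneg[of z] unfolding Q_def by simp
  qed
  moreover have "Aid t < 0" using Qneg[OF t] Aipos unfolding Q_def by (simp add: mult_less_0_iff)
  ultimately show ?thesis by simp
qed




lemma riccati:
  assumes bnd: "\<And>x. x \<ge> 0 \<Longrightarrow> \<bar>Ai x\<bar> \<le> B" and t: "t > 0"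
  shows "(Aid t)^2 > t * (Ai t)^2"
proof (rule ccontr)
  assume "\<not> (Aid t)^2 > t * (Ai t)^2"
  hence Et: "(Aid t)^2 - t * (Ai t)^2 \<le> 0" by simp
  have pd: "Ai x > 0" "Aid x < 0" if "x \<ge> 0" for x using Ai_pos_dec[OF bnd that] by auto
  define En where "En x = (Aid x)^2 - x * (Ai x)^2" for x
  have dE: "(En has_real_derivative - ((Ai x)^2)) (at x)" for x
    unfolding En_def by (auto intro!: derivative_eq_intros simp: power2_eq_square algebra_simps)
  have Eneg: "En x < 0" if xt: "x > t" for x
  proof -
    obtain z where z: "t < z" "z < x" "En x - En t = (x - t) * (- ((Ai z)^2))"
      using MVT2[OF xt dE] by blast
    have "Ai z > 0" using pd(1)[of z] z t by simp
    hence "(x - t) * (- ((Ai z)^2)) < 0" using z by (simp add: mult_pos_neg)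
    thus ?thesis using z Et unfolding En_def by simp
  qed
  define r where "r x = Aid x / Ai x" for x
  have dr: "(r has_real_derivative x - (r x)^2) (at x)" if "x \<ge> 0" for x
  proof -
    have ne: "Ai x \<noteq> 0" using pd(1)[OF that] by simp
    have "(r has_real_derivative (x * Ai x * Ai x - Aid x * Aid x) / (Ai x * Ai x)) (at x)"
      unfolding r_def using ne by (auto intro!: derivative_eq_intros simp: algebra_simps)
    moreover have "(x * Ai x * Ai x - Aid x * Aid x) / (Ai x * Ai x) = x - (r x)^2"
      using ne unfolding r_def by (simp add: field_simps power2_eq_square)
    ultimately show ?thesis by simp
  qed
  have rpos': "x - (r x)^2 > 0" if "x > t" for x
  proof -
    have ne: "Ai x > 0" using pd(1)[of x] that t by simp
    have "x - (r x)^2 = - En x / (Ai x)^2"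
      using ne unfolding r_def En_def by (simp add: field_simps power2_eq_square)
    thus ?thesis using Eneg[OF that] ne by (simp add: divide_neg_pos)
  qed
  have rneg: "r x < 0" if "x \<ge> 0" for x
    using pd[OF that] unfolding r_def by (simp add: divide_neg_pos)
  define t1 where "t1 = t + 1"
  define \<rho> where "\<rho> = - r t1"
  have rho: "\<rho> > 0" using rneg[of t1] t unfolding \<rho>_def t1_def by simp
  have rge: "r x \<ge> - \<rho>" if "x \<ge> t1" for x
  proof (cases "x = t1")
    case True thus ?thesis unfolding \<rho>_def by simp
  next
    case False
    hence "t1 < x" using that by simp
    have drT: "(r has_real_derivative y - (r y)^2) (at y)" if "t1 \<le> y" "y \<le> x" for y
      using dr[of y] t that unfolding t1_def by simp
    obtain z where z: "t1 < z" "z < x" "r x - r t1 = (x - t1) * (z - (r z)^2)"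
      using MVT2[OF \<open>t1 < x\<close> drT] by blast
    have "(x - t1) * (z - (r z)^2) \<ge> 0"
      using rpos'[of z] z \<open>t1 < x\<close> t unfolding t1_def by simp
    thus ?thesis using z unfolding \<rho>_def by simp
  qed
  have rsq: "(r x)^2 \<le> \<rho>^2" if "x \<ge> t1" for x
  proof -
    have "- \<rho> \<le> r x" "r x < 0" using rge[OF that] rneg[of x] that t unfolding t1_def by auto
    hence "\<bar>r x\<bar> \<le> \<bar>\<rho>\<bar>" using rho by simp
    thus ?thesis by (simp add: abs_le_square_iff)
  qed
  define T where "T = t1 + \<rho>^2 + 1"
  define S where "S = T + \<rho> + 1"
  have "T < S" using rho unfolding S_def by simp
  have T0: "T \<ge> 0" using t unfolding T_def t1_def by (simp add: add_nonneg_nonneg)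
  have drT: "(r has_real_derivative y - (r y)^2) (at y)" if "T \<le> y" "y \<le> S" for y
    using dr[of y] T0 that by simp
  obtain z where z: "T < z" "z < S" "r S - r T = (S - T) * (z - (r z)^2)"
    using MVT2[OF \<open>T < S\<close> drT] by blast
  have "t1 \<le> z" using z(1) zero_le_power2[of \<rho>] unfolding T_def by linarith
  hence rz: "(r z)^2 \<le> \<rho>^2" by (rule rsq)
  have "z - (r z)^2 \<ge> 1" using rz z(1) t unfolding T_def t1_def by linarith
  hence prod: "(S - T) * (z - (r z)^2) \<ge> S - T"
    using \<open>T < S\<close> mult_left_mono[of 1 "z - (r z)^2" "S - T"] by simp
  have "S - T = \<rho> + 1" unfolding S_def by simp
  hence "r S \<ge> r T + \<rho> + 1" using z(3) prod by linarith
  moreover have "r T \<ge> - \<rho>" using rge[of T] rho unfolding T_def by simp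
  moreover have "r S < 0" using \<open>T < S\<close> T0 by (intro rneg) linarith
  ultimately show False by simp
qed

lemma a_neg:
  assumes bnd: "\<And>x. x \<ge> 0 \<Longrightarrow> \<bar>Ai x\<bar> \<le> B" and mu: "\<mu> \<ge> 0" and t: "t \<ge> \<mu>^2"
  shows "\<mu> * Ai t + Aid t < 0"
proof (cases "t = 0")
  case True
  hence "\<mu> = 0" using t mu by simp
  thus ?thesis using True Aid0 c2_pos by simp
next
  case False
  hence tp: "t > 0" using t using zero_le_power2[of \<mu>] by linarith
  have pd: "Ai t > 0" "Aid t < 0" using Ai_pos_dec[OF bnd] tp by auto
  have e: "(sqrt t * Ai t)^2 = t * (Ai t)^2" using tp by (simp add: power_mult_distrib)
  have "(sqrt t * Ai t)^2 < (- Aid t)^2" unfolding e using riccati[OF bnd tp] by simp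
  moreover have "0 \<le> - Aid t" using pd by simp
  ultimately have "sqrt t * Ai t < - Aid t" by (rule power2_less_imp_less)
  moreover have "\<mu> \<le> sqrt t" by (rule real_le_rsqrt) (rule t)
  hence "\<mu> * Ai t \<le> sqrt t * Ai t" using pd by (intro mult_right_mono) auto
  ultimately show ?thesis by simp
qed




lemma main_from_bound:
  fixes \<mu> B :: real
  assumes bnd: "\<And>x. x \<ge> 0 \<Longrightarrow> \<bar>Ai x\<bar> \<le> B"
  assumes "\<mu> \<ge> 0"
  defines "\<phi> \<equiv> (\<lambda>x. pi * exp (\<mu> * x) * Ai (\<mu>\<^sup>2 + x))"
    and "\<psi> \<equiv> (\<lambda>x. (- (\<mu> * Bi (\<mu>\<^sup>2) + deriv Bi (\<mu>\<^sup>2)) / (\<mu> * Ai (\<mu>\<^sup>2) + deriv Ai (\<mu>\<^sup>2))) * exp (\<mu> * x) * Ai (\<mu>\<^sup>2 + x) + exp (\<mu> * x) * Bi (\<mu>\<^sup>2 + x))"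
  shows "(\<forall>x y. 0 \<le> x \<longrightarrow> x < y \<longrightarrow> \<phi> y < \<phi> x) \<and>
         (\<forall>x y. 0 \<le> x \<longrightarrow> x < y \<longrightarrow> \<psi> x < \<psi> y)"
proof -
  note mu = \<open>\<mu> \<ge> 0\<close>
  define a where "a t = \<mu> * Ai t + Aid t" for t
  define b where "b t = \<mu> * Bi t + Bid t" for t
  have aneg: "a t < 0" if "t \<ge> \<mu>^2" for t unfolding a_def by (rule a_neg[OF bnd mu that])
  have dA: "deriv Ai x = Aid x" for x by (rule DERIV_imp_deriv[OF Ai_deriv])
  have dB: "deriv Bi x = Bid x" for x by (rule DERIV_imp_deriv[OF Bi_deriv])
  define C where "C = - b (\<mu>^2) / a (\<mu>^2)"
  have psi_eq: "\<psi> = (\<lambda>x. C * exp (\<mu> * x) * Ai (\<mu>\<^sup>2 + x) + exp (\<mu> * x) * Bi (\<mu>\<^sup>2 + x))"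
    unfolding \<psi>_def C_def a_def b_def dA dB by simp
  have dphi: "(\<phi> has_real_derivative pi * exp (\<mu> * z) * a (\<mu>^2 + z)) (at z)" for z
    unfolding \<phi>_def a_def by (auto intro!: derivative_eq_intros simp: algebra_simps)
  have dpsi: "(\<psi> has_real_derivative exp (\<mu> * z) * (C * a (\<mu>^2 + z) + b (\<mu>^2 + z))) (at z)" for z
    unfolding psi_eq a_def b_def by (auto intro!: derivative_eq_intros simp: algebra_simps)
  have part1: "\<phi> y < \<phi> x" if "0 \<le> x" "x < y" for x y
  proof -
    obtain z where z: "x < z" "z < y" "\<phi> y - \<phi> x = (y - x) * (pi * exp (\<mu> * z) * a (\<mu>^2 + z))"
      using MVT2[OF \<open>x < y\<close> dphi] by blast
    have "a (\<mu>^2 + z) < 0" using aneg[of "\<mu>^2+z"] z that by simp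
    hence "pi * exp (\<mu> * z) * a (\<mu>^2 + z) < 0" by (simp add: mult_pos_neg)
    hence "(y - x) * (pi * exp (\<mu> * z) * a (\<mu>^2 + z)) < 0" using that by (simp add: mult_pos_neg)
    thus ?thesis using z by simp
  qed
  define R where "R t = b t / a t" for t
  have dR: "(R has_real_derivative (\<mu>^2 - s) * (Ai s * Bid s - Aid s * Bi s) / (a s)^2) (at s)"
    if "s \<ge> \<mu>^2" for s
  proof -
    have ne: "a s \<noteq> 0" using aneg[OF that] by simp
    have "(R has_real_derivative ((\<mu> * Bid s + s * Bi s) * a s - b s * (\<mu> * Aid s + s * Ai s)) / (a s * a s)) (at s)"
      unfolding R_def using ne unfolding a_def b_def
      by (auto intro!: derivative_eq_intros simp: algebra_simps)
    moreover have "((\<mu> * Bid s + s * Bi s) * a s - b s * (\<mu> * Aid s + s * Ai s)) = (\<mu>^2 - s) * (Ai s * Bid s - Aid s * Bi s)"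
      unfolding a_def b_def by (simp add: algebra_simps power2_eq_square)
    ultimately show ?thesis by (simp add: power2_eq_square)
  qed
  have key: "C * a t + b t > 0" if tg: "t > \<mu>^2" for t
  proof -
    obtain z where z: "\<mu>^2 < z" "z < t" "R t - R (\<mu>^2) = (t - \<mu>^2) * ((\<mu>^2 - z) * (Ai z * Bid z - Aid z * Bi z) / (a z)^2)"
      using MVT2[OF tg, of R] dR by force
    have "a z \<noteq> 0" using aneg[of z] z by simp
    hence "(\<mu>^2 - z) * (Ai z * Bid z - Aid z * Bi z) / (a z)^2 < 0"
      using wpos[of z] z by (simp add: mult_neg_pos divide_neg_pos)
    hence "(t - \<mu>^2) * ((\<mu>^2 - z) * (Ai z * Bid z - Aid z * Bi z) / (a z)^2) < 0"
      using that mult_pos_neg[of "t - \<mu>^2" "(\<mu>^2 - z) * (Ai z * Bid z - Aid z * Bi z) / (a z)^2"] by linarith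
    hence "R t < R (\<mu>^2)" using z by simp
    hence "b t / a t < - C" unfolding R_def C_def by simp
    moreover have "a t < 0" using aneg[of t] that by simp
    ultimately have "b t > - C * a t" by (simp add: divide_less_eq)
    thus ?thesis by simp
  qed
  have part2: "\<psi> x < \<psi> y" if "0 \<le> x" "x < y" for x y
  proof -
    obtain z where z: "x < z" "z < y" "\<psi> y - \<psi> x = (y - x) * (exp (\<mu> * z) * (C * a (\<mu>^2 + z) + b (\<mu>^2 + z)))"
      using MVT2[OF \<open>x < y\<close> dpsi] by blast
    have "C * a (\<mu>^2 + z) + b (\<mu>^2 + z) > 0" using key[of "\<mu>^2+z"] z that by simp
    hence "(y - x) * (exp (\<mu> * z) * (C * a (\<mu>^2 + z) + b (\<mu>^2 + z))) > 0" using that by simp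
    thus ?thesis using z by simp
  qed
  show ?thesis using part1 part2 by blast
qed




lemma refl13: "Gamma (1/3::real) * Gamma (2/3) = 2 * pi / sqrt 3"
proof -
  have h1: "1 - complex_of_real (1/3) = complex_of_real (2/3)" by simp
  have h2: "of_real pi * complex_of_real (1/3) = complex_of_real (pi/3)" by simp
  have "complex_of_real (Gamma (1/3) * Gamma (2/3)) = Gamma (complex_of_real (1/3)) * Gamma (complex_of_real (2/3))"
    by (simp only: of_real_mult Gamma_complex_of_real)
  also have "\<dots> = Gamma (complex_of_real (1/3)) * Gamma (1 - complex_of_real (1/3))"
    by (simp only: h1)
  also have "\<dots> = of_real pi / sin (of_real pi * complex_of_real (1/3))" by (rule Gamma_reflection_complex)
  also have "\<dots> = of_real pi / sin (complex_of_real (pi/3))" by (simp only: h2)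
  also have "\<dots> = of_real pi / complex_of_real (sin (pi/3))" by (simp only: sin_of_real)
  also have "\<dots> = complex_of_real (pi / sin (pi/3))" by simp
  finally have "Gamma (1/3::real) * Gamma (2/3) = pi / sin (pi/3)" by (simp only: of_real_eq_iff)
  thus ?thesis by (simp add: sin_60)
qed

lemma G1: "Gamma (1/3::real) = 2 * pi / (sqrt 3 * Gamma (2/3))"
proof -
  have g: "Gamma (2/3::real) > 0" by simp
  hence ne: "Gamma (2/3::real) \<noteq> 0" by linarith
  have "Gamma (1/3::real) = (Gamma (1/3) * Gamma (2/3)) / Gamma (2/3)" using ne by simp
  also have "\<dots> = 2 * pi / (sqrt 3 * Gamma (2/3))" unfolding refl13 by simp
  finally show ?thesis .
qed

lemma K1: "sqrt 3 / 2 * 3 powr (-2/3) * Gamma (1/3) = pi * airy_c1"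
proof -
  have g: "Gamma (2/3::real) > 0" by simp
  thus ?thesis unfolding airy_c1_def G1 by (simp add: powr_minus field_simps)
qed

lemma K2: "sqrt 3 / 2 * 3 powr (-1/3) * Gamma (2/3) = pi * airy_c2"
proof -
  have g: "Gamma (2/3::real) > 0" by simp
  thus ?thesis unfolding airy_c2_def G1 by (simp add: powr_minus field_simps)
qed

definition w :: complex where "w = Complex (1/2) (sqrt 3 / 2)"

lemma w_cube: "(- w)^3 = 1"
  by (simp add: w_def complex_eq_iff power3_eq_cube power2_eq_square algebra_simps)

lemma norm_w: "norm w = 1"
  by (simp add: w_def cmod_def power2_eq_square)

definition \<sigma> :: "nat \<Rightarrow> real" where "\<sigma> n = Im (w * (- w) ^ n)"

lemma sigma_vals: "\<sigma> (3*k) = sqrt 3 / 2" "\<sigma> (3*k+1) = - sqrt 3 / 2" "\<sigma> (3*k+2) = 0"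
proof -
  have p0: "(- w) ^ (3*k) = 1" by (simp add: power_mult w_cube)
  have p1: "(- w) ^ (3*k+1) = - w" by (simp add: power_add p0)
  have p2: "(- w) ^ (3*k+2) = w * w" by (simp add: power_add p0 power2_eq_square)
  show "\<sigma> (3*k) = sqrt 3 / 2" unfolding \<sigma>_def p0 by (simp add: w_def)
  show "\<sigma> (3*k+1) = - sqrt 3 / 2" unfolding \<sigma>_def p1 by (simp add: w_def)
  show "\<sigma> (3*k+2) = 0" unfolding \<sigma>_def p2 by (simp add: w_def)
qed

lemma Gamma_shift: "(a::real) > 0 \<Longrightarrow> Gamma (a + real k) = pochhammer a k * Gamma a"
proof -
  assume a: "a > 0"
  hence "a \<notin> \<int>\<^sub>\<le>\<^sub>0" using nonpos_Ints_nonpos by force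
  hence "pochhammer a k = Gamma (a + real k) / Gamma a" by (rule pochhammer_Gamma)
  thus ?thesis using Gamma_real_pos[OF a] by simp
qed

lemma coeff_id:
  "\<sigma> n * x ^ n / fact n * 3 powr ((real n - 2) / 3) * Gamma ((real n + 1) / 3)
     = pi * ((airy_c1 * cf n - airy_c2 * cg n) * x ^ n)"
proof -
  obtain k r where n: "n = 3*k + r" and r: "r < 3" by (metis div_mult_mod_eq mod_less_divisor zero_less_numeral mult.commute)
  consider "r = 0" | "r = 1" | "r = 2" using r by linarith
  thus ?thesis
  proof cases
    case 1
    have a: "3 powr ((real n - 2) / 3) = 3^k * 3 powr (-2/3)"
      using n 1 by (simp add: powr_add[symmetric] powr_realpow[symmetric] field_simps)
    have b: "Gamma ((real n + 1) / 3) = pochhammer (1/3) k * Gamma (1/3)"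
      using Gamma_shift[of "1/3" k] n 1 by (simp add: field_simps)
    have c: "cf n = 3^k * pochhammer (1/3) k / fact n" "cg n = 0" using n 1 by (simp_all add: cf_def cg_def)
    have sg: "\<sigma> n = sqrt 3 / 2" using sigma_vals(1)[of k] n 1 by simp
    have "\<sigma> n * x ^ n / fact n * 3 powr ((real n - 2) / 3) * Gamma ((real n + 1) / 3)
        = (sqrt 3 / 2 * 3 powr (-2/3) * Gamma (1/3)) * (3^k * pochhammer (1/3) k / fact n * x^n)"
      unfolding a b sg by (simp add: algebra_simps)
    also have "\<dots> = pi * ((airy_c1 * cf n - airy_c2 * cg n) * x ^ n)"
      unfolding K1 c by (simp add: algebra_simps)
    finally show ?thesis .
  next
    case 2
    have a: "3 powr ((real n - 2) / 3) = 3^k * 3 powr (-1/3)"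
      using n 2 by (simp add: powr_add[symmetric] powr_realpow[symmetric] field_simps)
    have b: "Gamma ((real n + 1) / 3) = pochhammer (2/3) k * Gamma (2/3)"
      using Gamma_shift[of "2/3" k] n 2 by (simp add: field_simps)
    have d: "Suc (3*k) div 3 = k" "Suc (3*k) mod 3 = 1" by presburger+
    have c: "cg n = 3^k * pochhammer (2/3) k / fact n" "cf n = 0" using n 2 d by (simp_all add: cf_def cg_def)
    have sg: "\<sigma> n = - sqrt 3 / 2" using sigma_vals(2)[of k] n 2 by simp
    have "\<sigma> n * x ^ n / fact n * 3 powr ((real n - 2) / 3) * Gamma ((real n + 1) / 3)
        = - (sqrt 3 / 2 * 3 powr (-1/3) * Gamma (2/3)) * (3^k * pochhammer (2/3) k / fact n * x^n)"
      unfolding a b sg by (simp add: algebra_simps)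
    also have "\<dots> = pi * ((airy_c1 * cf n - airy_c2 * cg n) * x ^ n)"
      unfolding K2 c by (simp add: algebra_simps)
    finally show ?thesis .
  next
    case 3
    have d: "Suc (Suc (3*k)) mod 3 = 2" by presburger
    have c: "cg n = 0" "cf n = 0" using n 3 d by (simp_all add: cf_def cg_def)
    have sg: "\<sigma> n = 0" using sigma_vals(3)[of k] n 3 by simp
    show ?thesis unfolding c sg by simp
  qed
qed




definition u :: "real \<Rightarrow> real" where "u s = (3 * s) powr (1/3)"
definition E0 :: "real \<Rightarrow> real" where "E0 s = exp (- s) * (3 * s) powr (-2/3)"
definition trm :: "real \<Rightarrow> nat \<Rightarrow> real \<Rightarrow> real" where
  "trm x n s = \<sigma> n * x ^ n / fact n * (E0 s * u s ^ n)"
definition Gf :: "real \<Rightarrow> real \<Rightarrow> real" where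
  "Gf x s = E0 s * Im (w * exp (- w * of_real (x * u s)))"

lemma EU: assumes "s \<ge> 0"
  shows "E0 s * u s ^ n = 3 powr ((real n - 2) / 3) * (s powr ((real n + 1) / 3 - 1) / exp s)"
proof (cases "s = 0")
  case True thus ?thesis by (simp add: E0_def)
next
  case False
  hence s: "s > 0" using assms by simp
  have "u s ^ n = (3 * s) powr (real n * (1/3))" unfolding u_def using s by (simp add: powr_power)
  hence "E0 s * u s ^ n = exp (- s) * ((3 * s) powr (-2/3) * (3 * s) powr (real n * (1/3)))"
    unfolding E0_def by simp
  also have "(3 * s) powr (-2/3) * (3 * s) powr (real n * (1/3)) = (3 * s) powr ((real n - 2) / 3)"
    by (simp add: powr_add[symmetric] field_simps)
  also have "\<dots> = 3 powr ((real n - 2) / 3) * s powr ((real n + 1) / 3 - 1)"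
    by (simp add: powr_mult field_simps)
  finally show ?thesis by (simp add: exp_minus field_simps)
qed

lemma T1: "(trm x n has_integral (\<sigma> n * x ^ n / fact n * 3 powr ((real n - 2) / 3) * Gamma ((real n + 1) / 3))) {0..}"
proof -
  have g: "((\<lambda>s. s powr ((real n + 1) / 3 - 1) / exp s) has_integral Gamma ((real n + 1) / 3)) {0..}"
    by (rule Gamma_integral_real) simp
  have "((\<lambda>s. (\<sigma> n * x ^ n / fact n * 3 powr ((real n - 2) / 3)) * (s powr ((real n + 1) / 3 - 1) / exp s))
      has_integral (\<sigma> n * x ^ n / fact n * 3 powr ((real n - 2) / 3)) * Gamma ((real n + 1) / 3)) {0..}"
    by (rule has_integral_mult_right[OF g])
  thus ?thesis
    by (rule has_integral_eq[rotated]) (simp add: trm_def EU)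
qed

lemma ImR: "Im (c * complex_of_real r) = Im c * r" by simp

lemma T2: "(\<lambda>n. trm x n s) sums Gf x s"
proof -
  define z where "z = - w * of_real (x * u s)"
  have "(\<lambda>n. w * (z ^ n /\<^sub>R fact n)) sums (w * exp z)"
    by (rule sums_mult[OF exp_converges])
  hence "(\<lambda>n. Im (w * (z ^ n /\<^sub>R fact n))) sums Im (w * exp z)"
    by (simp add: sums_complex_iff)
  hence "(\<lambda>n. E0 s * Im (w * (z ^ n /\<^sub>R fact n))) sums (E0 s * Im (w * exp z))"
    by (rule sums_mult)
  moreover have "E0 s * Im (w * (z ^ n /\<^sub>R fact n)) = trm x n s" for n
  proof -
    have z': "z = (- w) * of_real (x * u s)" by (simp add: z_def)
    have zn: "z ^ n = (- w) ^ n * of_real ((x * u s) ^ n)"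
      unfolding z' by (simp only: power_mult_distrib[of "- w"] of_real_power)
    have "w * (z ^ n /\<^sub>R fact n) = (w * (- w) ^ n) * of_real ((x * u s) ^ n / fact n)"
      unfolding zn by (simp add: scaleR_conv_of_real field_simps)
    hence "Im (w * (z ^ n /\<^sub>R fact n)) = Im ((w * (- w) ^ n) * of_real ((x * u s) ^ n / fact n))"
      by (rule arg_cong)
    also have "\<dots> = \<sigma> n * ((x * u s) ^ n / fact n)" unfolding \<sigma>_def by (rule ImR)
    finally have "Im (w * (z ^ n /\<^sub>R fact n)) = \<sigma> n * ((x * u s) ^ n / fact n)" .
    thus ?thesis unfolding trm_def by (simp add: power_mult_distrib field_simps)
  qed
  ultimately show ?thesis unfolding Gf_def z_def by simp
qed

lemma u_nonneg: "u s \<ge> 0" by (simp add: u_def)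
lemma E0_nonneg: "E0 s \<ge> 0" by (simp add: E0_def)

lemma T3: "\<bar>\<Sum>n<N. trm x n s\<bar> \<le> E0 s * exp (\<bar>x\<bar> * u s)"
proof -
  have sig: "\<bar>\<sigma> n\<bar> \<le> 1" for n
  proof -
    have "\<bar>\<sigma> n\<bar> \<le> cmod (w * (- w) ^ n)" unfolding \<sigma>_def by (rule abs_Im_le_cmod)
    also have "\<dots> = 1" by (simp add: norm_mult norm_power norm_w)
    finally show ?thesis .
  qed
  have b: "\<bar>trm x n s\<bar> \<le> E0 s * ((\<bar>x\<bar> * u s) ^ n / fact n)" for n
  proof -
    have "\<bar>trm x n s\<bar> = \<bar>\<sigma> n\<bar> * (E0 s * ((\<bar>x\<bar> * u s) ^ n / fact n))"
      unfolding trm_def using u_nonneg[of s] E0_nonneg[of s]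
      by (simp add: abs_mult power_abs power_mult_distrib field_simps)
    also have "\<dots> \<le> 1 * (E0 s * ((\<bar>x\<bar> * u s) ^ n / fact n))"
      using sig[of n] u_nonneg[of s] E0_nonneg[of s] by (intro mult_right_mono) auto
    finally show ?thesis by simp
  qed
  have "\<bar>\<Sum>n<N. trm x n s\<bar> \<le> (\<Sum>n<N. \<bar>trm x n s\<bar>)" by (rule sum_abs)
  also have "\<dots> \<le> (\<Sum>n<N. E0 s * ((\<bar>x\<bar> * u s) ^ n / fact n))" by (rule sum_mono[OF b])
  also have "\<dots> = E0 s * (\<Sum>n<N. (\<bar>x\<bar> * u s) ^ n / fact n)" by (simp add: sum_distrib_left)
  also have "(\<Sum>n<N. (\<bar>x\<bar> * u s) ^ n / fact n) \<le> exp (\<bar>x\<bar> * u s)"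
  proof -
    have "(\<lambda>n. (\<bar>x\<bar> * u s) ^ n /\<^sub>R fact n) sums exp (\<bar>x\<bar> * u s)" by (rule exp_converges)
    hence sm: "(\<lambda>n. (\<bar>x\<bar> * u s) ^ n / fact n) sums exp (\<bar>x\<bar> * u s)"
      by (simp add: divide_inverse mult.commute)
    have "(\<Sum>n<N. (\<bar>x\<bar> * u s) ^ n / fact n) \<le> suminf (\<lambda>n. (\<bar>x\<bar> * u s) ^ n / fact n)"
      by (rule sum_le_suminf[OF sums_summable[OF sm]]) (use u_nonneg[of s] in auto)
    thus ?thesis using sm by (simp add: sums_iff)
  qed
  hence "E0 s * (\<Sum>n<N. (\<bar>x\<bar> * u s) ^ n / fact n) \<le> E0 s * exp (\<bar>x\<bar> * u s)"
    using E0_nonneg[of s] by (rule mult_left_mono)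
  finally show ?thesis .
qed

definition M :: "real \<Rightarrow> real \<Rightarrow> real" where
  "M x s = exp (\<bar>x\<bar> * (6 * \<bar>x\<bar> + 1)) * (if s \<in> {0..1} then s powr (-2/3) else exp (-s/2))"

lemma M_int: "M x integrable_on {0..}"
proof -
  have "(\<lambda>s::real. if s \<in> {0..1} then s powr (-2/3) else exp (-s/2)) integrable_on {0..}"
    using integrable_Gamma_integral_bound[of "-2/3" 1] by simp
  from integrable_on_cmult_left[OF this, of "exp (\<bar>x\<bar> * (6 * \<bar>x\<bar> + 1))"]
  show ?thesis unfolding M_def by simp
qed

lemma u3: "s \<ge> 0 \<Longrightarrow> u s ^ 3 = 3 * s"
proof (cases "s = 0")
  case False
  assume "s \<ge> 0"
  hence "s > 0" using False by simp
  thus ?thesis unfolding u_def by (simp add: powr_power)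
qed (simp add: u_def)

lemma AMGM_bound: "s \<ge> 0 \<Longrightarrow> \<bar>x\<bar> * u s \<le> s / 2 + \<bar>x\<bar> * (6 * \<bar>x\<bar> + 1)"
proof -
  assume s: "s \<ge> 0"
  define v where "v = u s"
  define a where "a = \<bar>x\<bar>"
  have v: "v \<ge> 0" "v^3 = 3 * s" using u_nonneg u3[OF s] unfolding v_def by auto
  have a: "a \<ge> 0" unfolding a_def by simp
  show ?thesis unfolding v_def[symmetric] a_def[symmetric]
  proof (cases "v \<ge> 6 * a + 1")
    case True
    hence "v * v \<ge> v * 1" using v a by (intro mult_left_mono) auto
    hence "v * v \<ge> 6 * a" using True by linarith
    hence "v * (v * v) \<ge> v * (6 * a)" using v by (intro mult_left_mono) auto
    hence "a * v \<le> v^3 / 6" by (simp add: power3_eq_cube algebra_simps)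
    moreover have "a * (6 * a + 1) \<ge> 0" using a by simp
    ultimately show "a * v \<le> s / 2 + a * (6 * a + 1)" using v by linarith
  next
    case False
    hence "a * v \<le> a * (6 * a + 1)" using a by (intro mult_left_mono) auto
    thus "a * v \<le> s / 2 + a * (6 * a + 1)" using s by simp
  qed
qed

lemma T4: assumes "s \<ge> 0" shows "E0 s * exp (\<bar>x\<bar> * u s) \<le> M x s"
proof (cases "s = 0")
  case True thus ?thesis by (simp add: E0_def M_def)
next
  case False
  hence s: "s > 0" using assms by simp
  define K where "K = \<bar>x\<bar> * (6 * \<bar>x\<bar> + 1)"
  have e: "exp (- s) * exp (\<bar>x\<bar> * u s) \<le> exp K * exp (- s / 2)"
  proof -
    have "exp (- s) * exp (\<bar>x\<bar> * u s) = exp (\<bar>x\<bar> * u s - s)" by (simp add: exp_diff exp_minus field_simps)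
    also have "\<dots> \<le> exp (K - s / 2)" using AMGM_bound[of s x] s unfolding K_def by simp
    also have "K - s / 2 = K + (- s / 2)" by simp
    also have "exp (K + (- s / 2)) = exp K * exp (- s / 2)" by (rule exp_add)
    finally show ?thesis .
  qed
  have p: "(3 * s) powr (-2/3) = 3 powr (-2/3) * s powr (-2/3)" by (simp add: powr_mult)
  show ?thesis
  proof (cases "s \<le> 1")
    case True
    have "3 powr (-2/3) \<le> (1::real)"
      using ge_one_powr_ge_zero[of 3 "2/3"] by (simp add: powr_minus_divide)
    hence c: "(3 * s) powr (-2/3) \<le> s powr (-2/3)" unfolding p
      using mult_right_mono[of "3 powr (-2/3)" 1 "s powr (-2/3)"] by simp
    have eq0: "E0 s * exp (\<bar>x\<bar> * u s) = (3 * s) powr (-2/3) * (exp (- s) * exp (\<bar>x\<bar> * u s))"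
      unfolding E0_def by simp
    have ee: "exp (- s) * exp (\<bar>x\<bar> * u s) \<le> exp K"
    proof -
      have "exp (- s / 2) \<le> 1" using s by simp
      hence "exp K * exp (- s / 2) \<le> exp K * 1" by (intro mult_left_mono) auto
      thus ?thesis using e by linarith
    qed
    have "(3 * s) powr (-2/3) * (exp (- s) * exp (\<bar>x\<bar> * u s)) \<le> s powr (-2/3) * exp K"
      using c ee by (intro mult_mono) auto
    hence "E0 s * exp (\<bar>x\<bar> * u s) \<le> s powr (-2/3) * exp K" unfolding eq0 .
    also have "\<dots> = M x s" unfolding M_def K_def using True s by simp
    finally show ?thesis .
  next
    case False
    have "1 \<le> (3 * s) powr (2/3)" using False by (intro ge_one_powr_ge_zero) auto
    hence c: "(3 * s) powr (-2/3) \<le> 1" by (simp add: powr_minus_divide divide_le_eq_1)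
    have "E0 s * exp (\<bar>x\<bar> * u s) = (3 * s) powr (-2/3) * (exp (- s) * exp (\<bar>x\<bar> * u s))"
      unfolding E0_def by simp
    also have "\<dots> \<le> 1 * (exp (- s) * exp (\<bar>x\<bar> * u s))"
      using c by (intro mult_right_mono) auto
    also have "\<dots> \<le> 1 * (exp K * exp (- s / 2))" using e by simp
    also have "\<dots> = M x s" unfolding M_def K_def using False by simp
    finally show ?thesis .
  qed
qed

lemma Ai_sums: "(\<lambda>n. (airy_c1 * cf n - airy_c2 * cg n) * x ^ n) sums Ai x"
proof -
  have "(\<lambda>n. airy_c1 * (cf n * x ^ n) - airy_c2 * (cg n * x ^ n)) sums (airy_c1 * P cf x - airy_c2 * P cg x)"
    unfolding P_def
    by (intro sums_diff sums_mult summable_sums summable_rec3 cf_rec cg_rec)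
  thus ?thesis unfolding Ai_P by (simp add: algebra_simps)
qed

lemma T5: "(Gf x has_integral pi * Ai x) {0..}"
proof (rule has_integral_dominated_convergence[where f = "\<lambda>N s. \<Sum>n<N. trm x n s" and h = "M x"
      and y = "\<lambda>N. \<Sum>n<N. \<sigma> n * x ^ n / fact n * 3 powr ((real n - 2) / 3) * Gamma ((real n + 1) / 3)"])
  fix N
  show "((\<lambda>s. \<Sum>n<N. trm x n s) has_integral (\<Sum>n<N. \<sigma> n * x ^ n / fact n * 3 powr ((real n - 2) / 3) * Gamma ((real n + 1) / 3))) {0..}"
    by (intro has_integral_sum T1) auto
  show "\<forall>s\<in>{0..}. norm (\<Sum>n<N. trm x n s) \<le> M x s"
    using order_trans[OF T3 T4] by auto
next
  show "M x integrable_on {0..}" by (rule M_int)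
  show "\<forall>s\<in>{0..}. (\<lambda>N. \<Sum>n<N. trm x n s) \<longlonglongrightarrow> Gf x s"
    using T2 by (simp add: sums_def)
  have "(\<lambda>n. pi * ((airy_c1 * cf n - airy_c2 * cg n) * x ^ n)) sums (pi * Ai x)"
    by (rule sums_mult[OF Ai_sums])
  hence "(\<lambda>n. \<sigma> n * x ^ n / fact n * 3 powr ((real n - 2) / 3) * Gamma ((real n + 1) / 3)) sums (pi * Ai x)"
    by (simp only: coeff_id)
  thus "(\<lambda>N. \<Sum>n<N. \<sigma> n * x ^ n / fact n * 3 powr ((real n - 2) / 3) * Gamma ((real n + 1) / 3)) \<longlonglongrightarrow> pi * Ai x"
    by (simp add: sums_def)
qed

lemma T6: assumes "x \<ge> 0" shows "\<bar>Ai x\<bar> \<le> 3 powr (-2/3) * Gamma (1/3) / pi"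
proof -
  have e0: "(E0 has_integral 3 powr (-2/3) * Gamma (1/3)) {0..}"
  proof -
    have g: "((\<lambda>s::real. s powr (1/3 - 1) / exp s) has_integral Gamma (1/3)) {0..}"
      by (rule Gamma_integral_real) simp
    have "((\<lambda>s::real. (3::real) powr (-2/3) * (s powr (1/3 - 1) / exp s)) has_integral 3 powr (-2/3) * Gamma (1/3)) {0..}"
      by (rule has_integral_mult_right[OF g])
    thus ?thesis
      by (rule has_integral_eq[rotated]) (use EU[of _ 0] in simp)
  qed
  have bnd: "norm (Gf x s) \<le> E0 s" if "s \<in> {0..}" for s
  proof -
    have "\<bar>Im (w * exp (- w * of_real (x * u s)))\<bar> \<le> cmod (w * exp (- w * of_real (x * u s)))"
      by (rule abs_Im_le_cmod)
    also have "\<dots> = exp (Re (- w * of_real (x * u s)))" by (simp add: norm_mult norm_w)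
    also have "\<dots> = exp (- (x * u s) / 2)" by (simp add: w_def)
    also have "\<dots> \<le> 1" using mult_nonneg_nonneg[OF assms u_nonneg[of s]] by simp
    finally have "\<bar>Im (w * exp (- w * of_real (x * u s)))\<bar> \<le> 1" .
    thus ?thesis unfolding Gf_def using E0_nonneg[of s]
      by (simp add: abs_mult) (metis mult_left_mono mult.right_neutral)
  qed
  have "norm (integral {0..} (Gf x)) \<le> integral {0..} E0"
    by (rule integral_norm_bound_integral[OF has_integral_integrable[OF T5] has_integral_integrable[OF e0] bnd])
  hence "\<bar>pi * Ai x\<bar> \<le> 3 powr (-2/3) * Gamma (1/3)"
    using integral_unique[OF T5] integral_unique[OF e0] by simp
  thus ?thesis by (simp add: abs_mult field_simps)
qed


theorem lemma2p8:
  fixes \<mu> :: real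
  assumes "\<mu> \<ge> 0"
  defines "\<phi> \<equiv> (\<lambda>x. pi * exp (\<mu> * x) * Ai (\<mu>\<^sup>2 + x))"
    and "\<psi> \<equiv> (\<lambda>x. (- (\<mu> * Bi (\<mu>\<^sup>2) + deriv Bi (\<mu>\<^sup>2)) / (\<mu> * Ai (\<mu>\<^sup>2) + deriv Ai (\<mu>\<^sup>2))) * exp (\<mu> * x) * Ai (\<mu>\<^sup>2 + x) + exp (\<mu> * x) * Bi (\<mu>\<^sup>2 + x))"
  shows "(\<forall>x y. 0 \<le> x \<longrightarrow> x < y \<longrightarrow> \<phi> y < \<phi> x) \<and>
         (\<forall>x y. 0 \<le> x \<longrightarrow> x < y \<longrightarrow> \<psi> x < \<psi> y)"
  using main_from_bound[OF T6 assms(1)] unfolding \<phi>_def \<psi>_def by blast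

end
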